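(* Fix an integer $m\ge2$. Define $a^{(m)}_n=0$ if $n$ is not a power of $m$, $a^{(m)}_1=1$, and $a^{(m)}_{m^k}=(m/2)^{k/2}(-1)^{k+1}$ for $k\ge1$. Then $T_mf(x)=\sum_n a^{(m)}_nf(nx)$ satisfies $\|T_mf\|_{L^2}=\sqrt2\,\|f\|_{L^2}$ for all $f\in C_0(0,\infty)$, and hence extends to $\sqrt2$ times a unitary operator on $L^2[0,\infty)$.
   Context: $C_0(0,\infty)$ denotes continuous compactly supported functions on $(0,\infty)$; $L^2=L^2[0,\infty)$ with Lebesgue measure. *)

theory Defs
  imports "HOL-Analysis.Analysis"
begin

text \<open>Coefficients a^(m)_n: zero unless n is a power of m; a_1 = 1;
  a_(m^k) = (m/2)^(k/2) (-1)^(k+1) for k >= 1.  (a_0 = 0 since 0 is no power of m >= 2.)\<close>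
definition acoef :: "nat \<Rightarrow> nat \<Rightarrow> real" where
  "acoef m n = (if n = 1 then 1
     else if (\<exists>k. n = m ^ k)
       then (let k = (THE k. n = m ^ k) in
               (real m / 2) powr (real k / 2) * (-1) ^ (k + 1))
       else 0)"

definition Top :: "nat \<Rightarrow> (real \<Rightarrow> complex) \<Rightarrow> real \<Rightarrow> complex" where
  "Top m f x = (\<Sum>n. complex_of_real (acoef m n) * f (real n * x))"

text \<open>C_0(0,oo): continuous functions with compact support in (0,oo),
  regarded as functions on the reals vanishing outside that support.\<close>
definition C0 :: "(real \<Rightarrow> complex) \<Rightarrow> bool" where
  "C0 f \<longleftrightarrow> continuous_on {0<..} f \<and>
     (\<exists>a b. 0 < a \<and> a \<le> b \<and> (\<forall>x. x \<notin> {a..b} \<longrightarrow> f x = 0))"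

text \<open>Elements of L^2[0,oo) (represented by functions; equality is a.e. on [0,oo)).\<close>
definition L2 :: "(real \<Rightarrow> complex) \<Rightarrow> bool" where
  "L2 f \<longleftrightarrow> f \<in> borel_measurable lborel \<and>
     set_integrable lborel {0..} (\<lambda>x. (cmod (f x))\<^sup>2)"

definition L2norm :: "(real \<Rightarrow> complex) \<Rightarrow> real" where
  "L2norm f = sqrt (LINT x:{0..}|lborel. (cmod (f x))\<^sup>2)"

definition ae_eq0 :: "(real \<Rightarrow> complex) \<Rightarrow> (real \<Rightarrow> complex) \<Rightarrow> bool" where
  "ae_eq0 f g \<longleftrightarrow> (AE x in lborel. x \<ge> 0 \<longrightarrow> f x = g x)"

end

theory Submission imports Defs begin

definition NN :: "(real \<Rightarrow> complex) \<Rightarrow> ennreal" where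
  "NN f = (\<integral>\<^sup>+x. ennreal (indicator {0..} x * (cmod (f x))\<^sup>2) \<partial>lborel)"

lemma L2_iff: "L2 f \<longleftrightarrow> f \<in> borel_measurable borel \<and> NN f < \<infinity>"
proof -
  have "L2 f \<longleftrightarrow> f \<in> borel_measurable borel \<and> integrable lborel (\<lambda>x. indicator {0..} x * (cmod (f x))\<^sup>2)"
    unfolding L2_def set_integrable_def by simp
  also have "\<dots> \<longleftrightarrow> f \<in> borel_measurable borel \<and> NN f < \<infinity>"
  proof (cases "f \<in> borel_measurable borel")
    case True
    have "integrable lborel (\<lambda>x. indicator {0..} x * (cmod (f x))\<^sup>2) \<longleftrightarrow> NN f < \<infinity>"
      unfolding integrable_iff_bounded NN_def using True
      by (simp add: abs_mult)
    then show ?thesis using True by simp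
  qed simp
  finally show ?thesis .
qed

lemma L2norm_eq: "f \<in> borel_measurable borel \<Longrightarrow> L2norm f = sqrt (enn2real (NN f))"
  unfolding L2norm_def NN_def set_lebesgue_integral_def
  by (subst integral_eq_nn_integral) auto

lemma scale_nn:
  fixes F :: "real \<Rightarrow> real"
  assumes [measurable]: "F \<in> borel_measurable borel" and c: "c > 0"
  shows "(\<integral>\<^sup>+x. ennreal (indicator {0..} x * F (c * x)) \<partial>lborel)
     = ennreal (1/c) * (\<integral>\<^sup>+x. ennreal (indicator {0..} x * F x) \<partial>lborel)"
proof -
  have ind: "indicator {0..} (c*x) = (indicator {0..} x :: real)" for x
    using c by (auto simp: indicator_def zero_le_mult_iff)
  have "(\<integral>\<^sup>+x. ennreal (indicator {0..} x * F x) \<partial>lborel)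
      = \<bar>c\<bar> * (\<integral>\<^sup>+x. ennreal (indicator {0..} (0 + c*x) * F (0 + c*x)) \<partial>lborel)"
    by (rule nn_integral_real_affine) (use c in auto)
  also have "\<dots> = ennreal c * (\<integral>\<^sup>+x. ennreal (indicator {0..} x * F (c * x)) \<partial>lborel)"
    using c by (simp add: ind)
  finally have "ennreal (1/c) * (\<integral>\<^sup>+x. ennreal (indicator {0..} x * F x) \<partial>lborel)
     = ennreal (1/c) * ennreal c * (\<integral>\<^sup>+x. ennreal (indicator {0..} x * F (c * x)) \<partial>lborel)"
    by (simp add: mult.assoc)
  also have "ennreal (1/c) * ennreal c = 1" using c
    by (simp flip: ennreal_mult)
  finally show ?thesis by simp
qed

lemma pow_sq_swap: "((x::real)^k)\<^sup>2 = (x\<^sup>2)^k"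
  by (simp add: power_mult[symmetric] mult.commute)

lemma amgm_aux:
  fixes w y :: real and k :: nat
  assumes w: "w \<ge> 0" and y: "y \<ge> 0"
  shows "w^k * y \<le> ((3/4)^k + (4*w\<^sup>2/3)^k * y\<^sup>2) / 2"
proof -
  define a where "a = sqrt (3/4) ^ k"
  define d where "d = sqrt (4*w\<^sup>2/3) ^ k * y"
  have "0 \<le> (a - d)\<^sup>2" by simp
  have a2: "a\<^sup>2 = (3/4)^k" unfolding a_def pow_sq_swap by simp
  have d2: "d\<^sup>2 = (4*w\<^sup>2/3)^k * y\<^sup>2" unfolding d_def power_mult_distrib pow_sq_swap by simp
  have "sqrt (3/4) * sqrt (4*w\<^sup>2/3) = w"
    using w by (simp flip: real_sqrt_mult)
  hence ad: "a * d = w^k * y" unfolding a_def d_def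
    by (metis mult.assoc power_mult_distrib)
  have "(a-d)\<^sup>2 = a\<^sup>2 + d\<^sup>2 - 2*(a*d)" by (simp add: power2_eq_square algebra_simps)
  with \<open>0 \<le> (a - d)\<^sup>2\<close> have "0 \<le> a\<^sup>2 + d\<^sup>2 - 2*(a*d)" by simp
  hence "0 \<le> (3/4)^k + (4*w\<^sup>2/3)^k * y\<^sup>2 - 2*(w^k*y)" unfolding a2 d2 ad .
  thus ?thesis by (simp add: field_simps)
qed

lemma conv_lemma:
  assumes f: "L2 f" and lam: "l > 0" and w: "w \<ge> 0" and ww: "w\<^sup>2 = l/2"
  shows "AE x in lborel. 0 \<le> x \<longrightarrow> summable (\<lambda>k. w^k * cmod (f (l^k * x)))"
    and "(\<integral>\<^sup>+x. ennreal (indicator {0..} x * (\<Sum>k. w^k * cmod (f (l^k * x)))\<^sup>2) \<partial>lborel) < \<infinity>"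
proof -
  have fm[measurable]: "f \<in> borel_measurable borel" and fN: "NN f < \<infinity>" using f L2_iff by auto
  define \<rho> where "\<rho> = 4*w\<^sup>2/3"
  have \<rho>0: "\<rho> \<ge> 0" unfolding \<rho>_def by simp
  have rhol: "\<rho> / l = 2/3" unfolding \<rho>_def ww using lam by (simp add: field_simps)
  define b where "b k x = \<rho>^k * (indicator {0..} x * (cmod (f (l^k * x)))\<^sup>2)" for k x
  have b0: "b k x \<ge> 0" for k x unfolding b_def using \<rho>0 by simp
  define G where "G x = (\<Sum>k. ennreal (b k x))" for x
  have bm[measurable]: "(\<lambda>x. b k x) \<in> borel_measurable borel" for k unfolding b_def by measurable
  have Gm[measurable]: "G \<in> borel_measurable borel" unfolding G_def by measurable
  have intb: "(\<integral>\<^sup>+x. ennreal (b k x) \<partial>lborel) = ennreal ((2/3)^k) * NN f" for k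
  proof -
    have "(\<integral>\<^sup>+x. ennreal (b k x) \<partial>lborel) = (\<integral>\<^sup>+x. ennreal (\<rho>^k) * ennreal (indicator {0..} x * (cmod (f (l^k * x)))\<^sup>2) \<partial>lborel)"
      unfolding b_def using \<rho>0 by (simp add: ennreal_mult)
    also have "\<dots> = ennreal (\<rho>^k) * (\<integral>\<^sup>+x. ennreal (indicator {0..} x * (cmod (f (l^k * x)))\<^sup>2) \<partial>lborel)"
      by (rule nn_integral_cmult) measurable
    also have "(\<integral>\<^sup>+x. ennreal (indicator {0..} x * (cmod (f (l^k * x)))\<^sup>2) \<partial>lborel) = ennreal (1/l^k) * NN f"
      unfolding NN_def by (rule scale_nn[where F="\<lambda>y. (cmod (f y))\<^sup>2"]) (use lam in auto)
    also have "ennreal (\<rho>^k) * (ennreal (1/l^k) * NN f) = ennreal (\<rho>^k * (1/l^k)) * NN f"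
    proof -
      have "ennreal (\<rho>^k) * ennreal (1/l^k) = ennreal (\<rho>^k * (1/l^k))"
        by (rule ennreal_mult[symmetric]) (use \<rho>0 lam in auto)
      thus ?thesis by (metis mult.assoc)
    qed
    also have "\<rho>^k * (1/l^k) = (2/3)^k" by (simp add: power_divide[symmetric] rhol del: power_divide)
    finally show ?thesis .
  qed
  have "(\<integral>\<^sup>+x. G x \<partial>lborel) = (\<Sum>k. \<integral>\<^sup>+x. ennreal (b k x) \<partial>lborel)"
    unfolding G_def by (rule nn_integral_suminf) measurable
  also have "\<dots> = (\<Sum>k. ennreal ((2/3)^k)) * NN f" by (simp add: intb ennreal_suminf_multc)
  also have "(\<Sum>k. ennreal ((2/3::real)^k)) = ennreal (\<Sum>k. (2/3)^k)"
    by (rule suminf_ennreal2) (auto intro!: summable_geometric)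
  finally have GI: "(\<integral>\<^sup>+x. G x \<partial>lborel) < \<infinity>" using fN
    by (simp add: ennreal_mult_less_top)
  have AEG: "AE x in lborel. G x \<noteq> \<infinity>"
    by (rule nn_integral_PInf_AE) (use GI in auto)
  {
    fix x :: real assume x: "0 \<le> x" "G x \<noteq> \<infinity>"
    have sb: "summable (\<lambda>k. b k x)"
      by (rule summable_suminf_not_top) (use b0 x G_def in auto)
    have Gx: "G x = ennreal (\<Sum>k. b k x)" unfolding G_def
      by (rule suminf_ennreal2) (use b0 sb in auto)
    have bx: "b k x = (4*w\<^sup>2/3)^k * (cmod (f (l^k * x)))\<^sup>2" for k
      using x unfolding b_def \<rho>_def by simp
    have le: "w^k * cmod (f (l^k * x)) \<le> ((3/4)^k + b k x) / 2" for k
      unfolding bx by (rule amgm_aux) (use w in auto)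
    have s34: "summable (\<lambda>k. (3/4::real)^k)" by (rule summable_geometric) simp
    have ss: "summable (\<lambda>k. w^k * cmod (f (l^k * x)))"
      by (rule summable_comparison_test'[where g="\<lambda>k. ((3/4)^k + b k x) / 2"])
         (use le w in \<open>auto intro!: summable_divide summable_add s34 sb\<close>)
    define B where "B = (\<Sum>k. b k x)"
    have B0: "B \<ge> 0" unfolding B_def using b0 sb by (simp add: suminf_nonneg)
    have part: "(\<Sum>k<n. w^k * cmod (f (l^k * x))) \<le> 2 * sqrt B" for n
    proof -
      define a where "a k = sqrt (3/4) ^ k" for k
      define d where "d k = sqrt (4*w\<^sup>2/3) ^ k * cmod (f (l^k * x))" for k
      have "sqrt (3/4) * sqrt (4*w\<^sup>2/3) = w"
        using w by (simp flip: real_sqrt_mult)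
      hence ad: "a k * d k = w^k * cmod (f (l^k * x))" for k unfolding a_def d_def
        by (metis mult.assoc power_mult_distrib)
      have a2: "(a k)\<^sup>2 = (3/4)^k" for k unfolding a_def pow_sq_swap by simp
      have d2: "(d k)\<^sup>2 = b k x" for k unfolding d_def power_mult_distrib pow_sq_swap bx by simp
      have "(\<Sum>k<n. a k * d k)\<^sup>2 \<le> (\<Sum>k<n. (a k)\<^sup>2) * (\<Sum>k<n. (d k)\<^sup>2)"
        by (rule Cauchy_Schwarz_ineq_sum)
      also have "\<dots> \<le> 4 * B"
      proof (rule mult_mono)
        have "(\<Sum>k<n. (3/4::real)^k) \<le> (\<Sum>k. (3/4)^k)"
          by (rule sum_le_suminf) (use s34 in auto)
        also have "\<dots> = 4" by (subst suminf_geometric) auto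
        finally show "(\<Sum>k<n. (a k)\<^sup>2) \<le> 4" by (simp add: a2)
        show "(\<Sum>k<n. (d k)\<^sup>2) \<le> B" unfolding d2 B_def
          by (rule sum_le_suminf) (use sb b0 in auto)
      qed (auto simp: sum_nonneg)
      finally have "(\<Sum>k<n. w^k * cmod (f (l^k * x)))\<^sup>2 \<le> 4 * B" by (simp add: ad)
      hence "(\<Sum>k<n. w^k * cmod (f (l^k * x))) \<le> sqrt (4*B)" by (rule real_le_rsqrt)
      thus ?thesis by (simp add: real_sqrt_mult)
    qed
    have S: "(\<Sum>k. w^k * cmod (f (l^k * x))) \<le> 2 * sqrt B"
      by (rule suminf_le_const[OF ss part])
    have S0: "0 \<le> (\<Sum>k. w^k * cmod (f (l^k * x)))"
      by (rule suminf_nonneg[OF ss]) (use w in auto)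
    have "(\<Sum>k. w^k * cmod (f (l^k * x)))\<^sup>2 \<le> (2 * sqrt B)\<^sup>2"
      by (rule power_mono[OF S S0])
    also have "\<dots> = 4 * B" using B0 by (simp add: power_mult_distrib)
    finally have h: "(\<Sum>k. w^k * cmod (f (l^k * x)))\<^sup>2 \<le> 4 * B" .
    have "ennreal (indicator {0..} x * (\<Sum>k. w^k * cmod (f (l^k * x)))\<^sup>2) \<le> 4 * G x"
    proof -
      have "ennreal ((\<Sum>k. w^k * cmod (f (l^k * x)))\<^sup>2) \<le> ennreal (4 * B)" by (rule ennreal_leI[OF h])
      also have "ennreal (4 * B) = 4 * G x" using B0 Gx unfolding B_def by (simp add: ennreal_mult)
      finally show ?thesis using x by simp
    qed
    note ss this
  } note pt = this
  show "AE x in lborel. 0 \<le> x \<longrightarrow> summable (\<lambda>k. w^k * cmod (f (l^k * x)))"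
    using AEG by eventually_elim (use pt in auto)
  have "(\<integral>\<^sup>+x. ennreal (indicator {0..} x * (\<Sum>k. w^k * cmod (f (l^k * x)))\<^sup>2) \<partial>lborel)
      \<le> (\<integral>\<^sup>+x. 4 * G x \<partial>lborel)"
  proof (rule nn_integral_mono_AE)
    show "AE x in lborel. ennreal (indicator {0..} x * (\<Sum>k. w^k * cmod (f (l^k * x)))\<^sup>2) \<le> 4 * G x"
      using AEG proof eventually_elim
      case (elim x) show ?case
        by (cases "0 \<le> x") (use pt elim in auto)
    qed
  qed
  also have "\<dots> = 4 * (\<integral>\<^sup>+x. G x \<partial>lborel)" by (rule nn_integral_cmult) measurable
  finally show "(\<integral>\<^sup>+x. ennreal (indicator {0..} x * (\<Sum>k. w^k * cmod (f (l^k * x)))\<^sup>2) \<partial>lborel) < \<infinity>"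
    using GI by (simp add: ennreal_mult_less_top le_less_trans)
qed


definition qq :: "nat \<Rightarrow> real" where "qq m = sqrt (real m / 2)"
definition al :: "nat \<Rightarrow> nat \<Rightarrow> complex" where
  "al m k = (if k = 0 then 1 else - complex_of_real ((- qq m)^k))"

lemma qq_nonneg[simp]: "qq m \<ge> 0" unfolding qq_def by simp
lemma pow_shift: "(l::real) ^ k * (l * x) = l ^ Suc k * x" by (simp add: algebra_simps)
lemma qq_pos: "m \<ge> 2 \<Longrightarrow> qq m > 0" unfolding qq_def by simp
lemma qq_sq: "(qq m)\<^sup>2 = real m / 2" unfolding qq_def by simp

lemma acoef_pow:
  assumes m: "m \<ge> 2"
  shows "complex_of_real (acoef m (m^k)) = al m k"
proof (cases "k = 0")
  case True then show ?thesis by (simp add: acoef_def al_def)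
next
  case False
  have "m^k \<ge> m^1" by (rule power_increasing) (use m False in auto)
  hence n1: "m^k \<noteq> 1" using m False by auto
  have the: "(THE j. m^k = m^j) = k"
    by (rule the_equality) (use m in \<open>auto simp: power_inject_exp\<close>)
  have pw: "(real m / 2) powr (real k / 2) = (qq m)^k"
  proof -
    have "(real m / 2) powr (real k / 2) = ((real m / 2) powr (1/2)) powr real k"
      by (simp add: powr_powr)
    also have "\<dots> = ((real m / 2) powr (1/2)) ^ k" using m by (subst powr_realpow) auto
    also have "(real m / 2) powr (1/2) = qq m" unfolding qq_def by (simp add: powr_half_sqrt)
    finally show ?thesis .
  qed
  have "acoef m (m^k) = (qq m)^k * (-1)^(k+1)"
    unfolding acoef_def using n1 the pw by (auto simp: Let_def)
  also have "\<dots> = - ((- qq m)^k)" by (simp add: power_minus' power_mult_distrib)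
  finally show ?thesis using False by (simp add: al_def)
qed

lemma acoef_zero:
  assumes "m \<ge> 2" "n \<notin> range (\<lambda>k. m^k)"
  shows "acoef m n = 0"
proof -
  have "n \<noteq> 1" using assms by (metis power_0 rangeI)
  moreover have "\<not> (\<exists>k. n = m^k)" using assms by auto
  ultimately show ?thesis unfolding acoef_def by simp
qed

lemma norm_al: "m \<ge> 2 \<Longrightarrow> cmod (al m k) = (qq m)^k"
  by (auto simp: al_def norm_power abs_of_pos qq_pos)

lemma Top_sums:
  assumes m: "m \<ge> 2" and s: "(\<lambda>k. al m k * f (real m ^ k * x)) sums s"
  shows "Top m f x = s"
proof -
  have sm: "strict_mono (\<lambda>k::nat. m^k)" using m by (intro strict_monoI power_strict_increasing) auto
  have "(\<lambda>n. complex_of_real (acoef m n) * f (real n * x)) sums s"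
    by (rule sums_mono_reindex[OF sm, THEN iffD1]) (use s acoef_pow[OF m] acoef_zero[OF m] in auto)
  thus ?thesis unfolding Top_def by (rule sums_unique[symmetric])
qed

lemma Top_abs:
  assumes m: "m \<ge> 2" and s: "summable (\<lambda>k. (qq m)^k * cmod (f (real m ^ k * x)))"
  shows "summable (\<lambda>k. al m k * f (real m ^ k * x))"
    and "Top m f x = (\<Sum>k. al m k * f (real m ^ k * x))"
proof -
  show sa: "summable (\<lambda>k. al m k * f (real m ^ k * x))"
    by (rule summable_norm_cancel, rule summable_comparison_test'[OF s])
       (auto simp: norm_mult norm_al[OF m])
  show "Top m f x = (\<Sum>k. al m k * f (real m ^ k * x))"
    by (rule Top_sums[OF m]) (use sa in \<open>simp add: summable_sums\<close>)
qed

lemma shift_summable: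
  fixes l x c :: real and h :: "real \<Rightarrow> complex"
  assumes "summable (\<lambda>k. c^k * cmod (h (l ^ k * x)))" "c > 0"
  shows "summable (\<lambda>k. c^k * cmod (h (l ^ k * (l * x))))"
proof -
  have "summable (\<lambda>k. c^(Suc k) * cmod (h (l ^ (Suc k) * x)))"
    using assms(1) by (subst summable_Suc_iff)
  hence "summable (\<lambda>k. (1/c) * (c^(Suc k) * cmod (h (l ^ (Suc k) * x))))"
    by (rule summable_mult)
  moreover have "(\<lambda>k. (1/c) * (c^(Suc k) * cmod (h (l ^ (Suc k) * x)))) = (\<lambda>k. c^k * cmod (h (l ^ k * (l * x))))"
    by (rule ext) (use assms(2) in \<open>simp only: pow_shift, simp\<close>)
  ultimately show ?thesis by simp
qed

lemma lemA:
  assumes m: "m \<ge> 2"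
    and fh: "\<And>k. f (real m ^ k * x) = h (real m ^ k * x) + complex_of_real (qq m) * h (real m ^ Suc k * x)"
    and s: "summable (\<lambda>k. (qq m)^k * cmod (h (real m ^ k * x)))"
  shows "Top m f x = h x + 2 * complex_of_real (qq m) * h (real m * x)"
proof -
  define q where "q = qq m"
  have q: "q > 0" unfolding q_def using qq_pos[OF m] .
  define u where "u k = al m k * h (real m ^ k * x)" for k
  define v where "v k = complex_of_real q * (al m k * h (real m ^ Suc k * x))" for k
  have su: "summable u" unfolding u_def using Top_abs(1)[OF m s] .
  have s1: "summable (\<lambda>k. (qq m)^k * cmod (h (real m ^ k * (real m * x))))"
    by (rule shift_summable[OF s qq_pos[OF m]])
  have sv: "summable v" unfolding v_def
    using summable_mult[OF Top_abs(1)[OF m s1], of "complex_of_real q"] unfolding pow_shift .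
  have tuv: "al m k * f (real m ^ k * x) = u k + v k" for k
    unfolding u_def v_def fh q_def by (simp add: algebra_simps)
  have suv: "(\<lambda>k. al m k * f (real m ^ k * x)) sums (suminf u + suminf v)"
    unfolding tuv by (intro sums_add summable_sums su sv)
  have e: "u (Suc k) + v k = (if k = 0 then 2 * complex_of_real q * h (real m * x) else 0)" for k
    unfolding u_def v_def al_def q_def[symmetric]
    by (cases "k = 0") (auto simp: algebra_simps)
  have "(\<lambda>k. u (Suc k) + v k) sums (2 * complex_of_real q * h (real m * x))"
    unfolding e using sums_single[of 0 "\<lambda>_. 2 * complex_of_real q * h (real m * x)"] by simp
  moreover have "(\<lambda>k. u (Suc k) + v k) sums ((\<Sum>k. u (Suc k)) + suminf v)"
    using su sv by (intro sums_add summable_sums) (auto simp: summable_Suc_iff)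
  ultimately have "(\<Sum>k. u (Suc k)) + suminf v = 2 * complex_of_real q * h (real m * x)"
    using sums_unique2 by blast
  moreover have "(\<Sum>k. u (Suc k)) = suminf u - u 0" by (rule suminf_split_head[OF su])
  moreover have "u 0 = h x" unfolding u_def al_def by simp
  ultimately have "suminf u + suminf v = h x + 2 * complex_of_real q * h (real m * x)"
    by (simp add: algebra_simps)
  thus ?thesis using Top_sums[OF m suv] q_def by simp
qed


lemma series_L2:
  fixes c :: "nat \<Rightarrow> complex"
  assumes f: "L2 f" and lam: "l > 0" and w: "w \<ge> 0" and ww: "w\<^sup>2 = l/2"
    and c: "\<And>k. cmod (c k) \<le> w^k"
  shows "L2 (\<lambda>x. \<Sum>k. c k * f (l^k * x))"
proof -
  have fm[measurable]: "f \<in> borel_measurable borel" using f L2_iff by auto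
  have m: "(\<lambda>x. \<Sum>k. c k * f (l^k * x)) \<in> borel_measurable borel" by measurable
  have "NN (\<lambda>x. \<Sum>k. c k * f (l^k * x)) \<le> (\<integral>\<^sup>+x. ennreal (indicator {0..} x * (\<Sum>k. w^k * cmod (f (l^k * x)))\<^sup>2) \<partial>lborel)"
    unfolding NN_def
  proof (rule nn_integral_mono_AE)
    show "AE x in lborel. ennreal (indicator {0..} x * (cmod (\<Sum>k. c k * f (l^k * x)))\<^sup>2)
        \<le> ennreal (indicator {0..} x * (\<Sum>k. w^k * cmod (f (l^k * x)))\<^sup>2)"
      using conv_lemma(1)[OF f lam w ww] proof eventually_elim
      case (elim x)
      show ?case
      proof (cases "0 \<le> x")
        case True
        with elim have s: "summable (\<lambda>k. w^k * cmod (f (l^k * x)))" by simp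
        have "cmod (\<Sum>k. c k * f (l^k * x)) \<le> (\<Sum>k. w^k * cmod (f (l^k * x)))"
          by (rule norm_suminf_le[OF _ s]) (auto simp: norm_mult intro!: mult_right_mono c)
        hence "(cmod (\<Sum>k. c k * f (l^k * x)))\<^sup>2 \<le> (\<Sum>k. w^k * cmod (f (l^k * x)))\<^sup>2"
          by (rule power_mono) simp
        thus ?thesis using True by (simp add: ennreal_leI)
      qed simp
    qed
  qed
  also have "\<dots> < \<infinity>" by (rule conv_lemma(2)[OF f lam w ww])
  finally show ?thesis using m L2_iff by auto
qed

lemma energy_id:
  fixes a b :: complex and q M :: real
  assumes "q\<^sup>2 = M/2"
  shows "(cmod (a + 2 * complex_of_real q * b))\<^sup>2 + (cmod a)\<^sup>2
       = 2 * (cmod (a + complex_of_real q * b))\<^sup>2 + M * (cmod b)\<^sup>2"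
proof -
  have M: "M = 2 * q\<^sup>2" using assms by simp
  show ?thesis unfolding M cmod_power2 by (simp add: power2_eq_square algebra_simps)
qed


lemma Top_meas:
  assumes [measurable]: "f \<in> borel_measurable borel" shows "Top m f \<in> borel_measurable borel"
  unfolding Top_def by measurable

lemma summable_propag:
  assumes m: "m \<ge> 2" and s: "summable (\<lambda>k. (qq m)^k * cmod (f (real m ^ k * x)))"
  shows "summable (\<lambda>k. (qq m)^k * cmod (f (real m ^ k * (real m ^ j * x))))"
proof (induction j)
  case 0 then show ?case using s by simp
next
  case (Suc j)
  from shift_summable[OF Suc qq_pos[OF m]] show ?case by (simp add: mult.assoc)
qed

lemma split_h:
  assumes m: "m \<ge> 2" and s: "summable (\<lambda>k. (qq m)^k * cmod (f (real m ^ k * y)))"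
  shows "f y = (\<Sum>k. complex_of_real ((- qq m)^k) * f (real m ^ k * y))
      + complex_of_real (qq m) * (\<Sum>k. complex_of_real ((- qq m)^k) * f (real m ^ k * (real m * y)))"
proof -
  define q where "q = qq m"
  have q: "q > 0" unfolding q_def using qq_pos[OF m] .
  define F where "F k = complex_of_real ((- q)^k) * f (real m ^ k * y)" for k
  define G where "G k = complex_of_real ((- q)^k) * f (real m ^ k * (real m * y))" for k
  have nF: "norm (F k) = q^k * cmod (f (real m ^ k * y))" for k
    unfolding F_def using q by (simp add: norm_mult norm_power)
  have nG: "norm (G k) = q^k * cmod (f (real m ^ k * (real m * y)))" for k
    unfolding G_def using q by (simp add: norm_mult norm_power)
  have sF: "summable F" by (rule summable_norm_cancel) (use s nF q_def in simp)
  have sG: "summable G" by (rule summable_norm_cancel) (use shift_summable[OF s qq_pos[OF m]] nG q_def in simp)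
  have FS: "F (Suc k) = complex_of_real (- q) * G k" for k
    unfolding F_def G_def by (simp add: pow_shift)
  have "suminf (\<lambda>k. F (Suc k)) = suminf F - F 0" by (rule suminf_split_head[OF sF])
  moreover have "suminf (\<lambda>k. F (Suc k)) = complex_of_real (- q) * suminf G"
    unfolding FS by (rule suminf_mult[OF sG])
  moreover have "F 0 = f y" unfolding F_def by simp
  ultimately have "suminf F = f y - complex_of_real q * suminf G" by (simp add: algebra_simps)
  thus ?thesis unfolding F_def G_def q_def by simp
qed

lemma main_iso:
  assumes m: "m \<ge> 2" and f: "L2 f"
  shows "L2 (Top m f)" and "NN (Top m f) = 2 * NN f"
proof -
  have fm[measurable]: "f \<in> borel_measurable borel" and fN: "NN f < \<infinity>" using f L2_iff by auto
  have Tm[measurable]: "Top m f \<in> borel_measurable borel" using Top_meas[OF fm] .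
  define q where "q = qq m"
  have q: "q > 0" unfolding q_def using qq_pos[OF m] .
  have qsq: "q\<^sup>2 = real m / 2" unfolding q_def by (rule qq_sq)
  have lm: "real m > 0" using m by simp
  define h where "h x = (\<Sum>k. complex_of_real ((- q)^k) * f (real m ^ k * x))" for x
  have hL2: "L2 h" unfolding h_def
    by (rule series_L2[OF f lm _ qsq]) (use q in \<open>auto simp: norm_power\<close>)
  have hm[measurable]: "h \<in> borel_measurable borel" and hN: "NN h < \<infinity>" using hL2 L2_iff by auto
  have AEf: "AE x in lborel. 0 \<le> x \<longrightarrow> summable (\<lambda>k. q^k * cmod (f (real m ^ k * x)))"
    by (rule conv_lemma(1)[OF f lm _ qsq]) (use q in simp)
  have AEh: "AE x in lborel. 0 \<le> x \<longrightarrow> summable (\<lambda>k. q^k * cmod (h (real m ^ k * x)))"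
    by (rule conv_lemma(1)[OF hL2 lm _ qsq]) (use q in simp)
  define A where "A x = indicator {0..} x * (cmod (Top m f x))\<^sup>2" for x
  define B where "B x = indicator {0..} x * (cmod (h x))\<^sup>2" for x
  define C where "C x = 2 * (indicator {0..} x * (cmod (f x))\<^sup>2)" for x
  define D where "D x = real m * (indicator {0..} x * (cmod (h (real m * x)))\<^sup>2)" for x
  have AE1: "AE x in lborel. ennreal (A x) + ennreal (B x) = ennreal (C x) + ennreal (D x)"
    using AEf AEh proof eventually_elim
    case (elim x)
    show ?case
    proof (cases "0 \<le> x")
      case True
      with elim have sf: "summable (\<lambda>k. q^k * cmod (f (real m ^ k * x)))"
        and sh: "summable (\<lambda>k. q^k * cmod (h (real m ^ k * x)))" by auto
      have fh: "f (real m ^ k * x) = h (real m ^ k * x) + complex_of_real q * h (real m ^ Suc k * x)" for k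
      proof -
        have "f (real m ^ k * x) = h (real m ^ k * x) + complex_of_real q * h (real m * (real m ^ k * x))"
          using split_h[OF m summable_propag[OF m sf[unfolded q_def], of k]]
          unfolding h_def q_def by simp
        thus ?thesis by (simp add: mult.assoc)
      qed
      have T: "Top m f x = h x + 2 * complex_of_real q * h (real m * x)"
        using lemA[OF m fh[unfolded q_def] sh[unfolded q_def]] unfolding q_def .
      have f0: "f x = h x + complex_of_real q * h (real m * x)" using fh[of 0] by simp
      have "A x + B x = C x + D x"
        unfolding A_def B_def C_def D_def T f0 using True energy_id[OF qsq] by simp
      moreover have "A x \<ge> 0" "B x \<ge> 0" "C x \<ge> 0" "D x \<ge> 0"
        unfolding A_def B_def C_def D_def by auto
      ultimately show ?thesis by (simp flip: ennreal_plus)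
    qed (simp add: A_def B_def C_def D_def)
  qed
  have "NN (Top m f) + NN h = (\<integral>\<^sup>+x. ennreal (A x) + ennreal (B x) \<partial>lborel)"
    unfolding NN_def A_def B_def by (rule nn_integral_add[symmetric]) measurable
  also have "\<dots> = (\<integral>\<^sup>+x. ennreal (C x) + ennreal (D x) \<partial>lborel)"
    by (rule nn_integral_cong_AE[OF AE1])
  also have "\<dots> = (\<integral>\<^sup>+x. ennreal (C x) \<partial>lborel) + (\<integral>\<^sup>+x. ennreal (D x) \<partial>lborel)"
    unfolding C_def D_def by (rule nn_integral_add) measurable
  also have "(\<integral>\<^sup>+x. ennreal (C x) \<partial>lborel) = 2 * NN f"
  proof -
    have "(\<integral>\<^sup>+x. ennreal (C x) \<partial>lborel) = (\<integral>\<^sup>+x. 2 * ennreal (indicator {0..} x * (cmod (f x))\<^sup>2) \<partial>lborel)"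
      unfolding C_def by (simp add: ennreal_mult)
    also have "\<dots> = 2 * NN f" unfolding NN_def by (rule nn_integral_cmult) measurable
    finally show ?thesis .
  qed
  also have "(\<integral>\<^sup>+x. ennreal (D x) \<partial>lborel) = NN h"
  proof -
    have "(\<integral>\<^sup>+x. ennreal (D x) \<partial>lborel) = (\<integral>\<^sup>+x. ennreal (real m) * ennreal (indicator {0..} x * (cmod (h (real m * x)))\<^sup>2) \<partial>lborel)"
      unfolding D_def by (simp add: ennreal_mult)
    also have "\<dots> = ennreal (real m) * (\<integral>\<^sup>+x. ennreal (indicator {0..} x * (cmod (h (real m * x)))\<^sup>2) \<partial>lborel)"
      by (rule nn_integral_cmult) measurable
    also have "(\<integral>\<^sup>+x. ennreal (indicator {0..} x * (cmod (h (real m * x)))\<^sup>2) \<partial>lborel) = ennreal (1 / real m) * NN h"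
      unfolding NN_def by (rule scale_nn[where F="\<lambda>y. (cmod (h y))\<^sup>2"]) (use lm in auto)
    also have "ennreal (real m) * (ennreal (1 / real m) * NN h) = ennreal (real m * (1 / real m)) * NN h"
      by (subst ennreal_mult) (use lm in \<open>auto simp: mult.assoc\<close>)
    also have "real m * (1 / real m) = 1" using lm by simp
    finally show ?thesis by simp
  qed
  finally have "NN h + NN (Top m f) = NN h + 2 * NN f" by (simp add: add.commute)
  hence TN: "NN (Top m f) = 2 * NN f" using hN by (auto simp: ennreal_add_left_cancel)
  thus "NN (Top m f) = 2 * NN f" .
  show "L2 (Top m f)" unfolding L2_iff using TN fN by (simp add: ennreal_mult_less_top)
qed


lemma split_gen:
  fixes l c y :: real and g :: "real \<Rightarrow> complex"
  assumes s: "summable (\<lambda>k. c^k * cmod (g (l ^ k * y)))" and c: "c > 0"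
  shows "(\<Sum>k. complex_of_real ((- c)^k) * g (l ^ k * y))
     = g y - complex_of_real c * (\<Sum>k. complex_of_real ((- c)^k) * g (l ^ k * (l * y)))"
proof -
  define F where "F k = complex_of_real ((- c)^k) * g (l ^ k * y)" for k
  define G where "G k = complex_of_real ((- c)^k) * g (l ^ k * (l * y))" for k
  have nF: "norm (F k) = c^k * cmod (g (l ^ k * y))" for k
    unfolding F_def using c by (simp add: norm_mult norm_power)
  have nG: "norm (G k) = c^k * cmod (g (l ^ k * (l * y)))" for k
    unfolding G_def using c by (simp add: norm_mult norm_power)
  have sF: "summable F" by (rule summable_norm_cancel) (use s nF in simp)
  have sG: "summable G" by (rule summable_norm_cancel) (use shift_summable[OF s c] nG in simp)
  have FS: "F (Suc k) = complex_of_real (- c) * G k" for k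
    unfolding F_def G_def by (simp add: pow_shift)
  have "suminf (\<lambda>k. F (Suc k)) = suminf F - F 0" by (rule suminf_split_head[OF sF])
  moreover have "suminf (\<lambda>k. F (Suc k)) = complex_of_real (- c) * suminf G"
    unfolding FS by (rule suminf_mult[OF sG])
  moreover have "F 0 = g y" unfolding F_def by simp
  ultimately have "suminf F = g y - complex_of_real c * suminf G" by (simp add: algebra_simps)
  thus ?thesis unfolding F_def G_def by simp
qed

lemma sq_tri: "(cmod (a + complex_of_real c * b))\<^sup>2 \<le> 2 * (cmod a)\<^sup>2 + 2 * c\<^sup>2 * (cmod b)\<^sup>2"
proof -
  have "cmod (a + complex_of_real c * b) \<le> cmod a + \<bar>c\<bar> * cmod b"
    by (metis norm_mult norm_of_real norm_triangle_ineq)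
  hence "(cmod (a + complex_of_real c * b))\<^sup>2 \<le> (cmod a + \<bar>c\<bar> * cmod b)\<^sup>2"
    by (rule power_mono) simp
  also have "\<dots> \<le> 2 * (cmod a)\<^sup>2 + 2 * c\<^sup>2 * (cmod b)\<^sup>2"
    using sum_squares_ge_zero[of "cmod a - \<bar>c\<bar> * cmod b" 0]
    by (simp add: power2_eq_square algebra_simps)
  finally show ?thesis .
qed

lemma NN_scaled_finite:
  assumes [measurable]: "h \<in> borel_measurable borel" and hN: "NN h < \<infinity>" and c: "c > 0"
  shows "(\<integral>\<^sup>+x. ennreal (indicator {0..} x * (cmod (h (c * x)))\<^sup>2) \<partial>lborel) < \<infinity>"
proof -
  have "(\<integral>\<^sup>+x. ennreal (indicator {0..} x * (cmod (h (c * x)))\<^sup>2) \<partial>lborel) = ennreal (1/c) * NN h"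
    unfolding NN_def by (rule scale_nn[where F="\<lambda>y. (cmod (h y))\<^sup>2"]) (use c in auto)
  thus ?thesis using hN by (simp add: ennreal_mult_less_top)
qed

lemma L2_comb:
  assumes h: "L2 h" and c: "c > 0"
  shows "L2 (\<lambda>x. h x + complex_of_real d * h (c * x))"
proof -
  have hm[measurable]: "h \<in> borel_measurable borel" and hN: "NN h < \<infinity>" using h L2_iff by auto
  have "NN (\<lambda>x. h x + complex_of_real d * h (c * x))
     \<le> (\<integral>\<^sup>+x. ennreal (2 * (indicator {0..} x * (cmod (h x))\<^sup>2)) + ennreal (2 * d\<^sup>2 * (indicator {0..} x * (cmod (h (c * x)))\<^sup>2)) \<partial>lborel)"
    unfolding NN_def
  proof (rule nn_integral_mono)
    fix x
    have "indicator {0..} x * (cmod (h x + complex_of_real d * h (c * x)))\<^sup>2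
       \<le> 2 * (indicator {0..} x * (cmod (h x))\<^sup>2) + 2 * d\<^sup>2 * (indicator {0..} x * (cmod (h (c * x)))\<^sup>2)"
      using sq_tri[of "h x" d "h (c * x)"] by (auto simp: indicator_def)
    thus "ennreal (indicator {0..} x * (cmod (h x + complex_of_real d * h (c * x)))\<^sup>2)
       \<le> ennreal (2 * (indicator {0..} x * (cmod (h x))\<^sup>2)) + ennreal (2 * d\<^sup>2 * (indicator {0..} x * (cmod (h (c * x)))\<^sup>2))"
      by (simp add: ennreal_plus[symmetric] ennreal_leI del: ennreal_plus)
  qed
  also have "\<dots> = (\<integral>\<^sup>+x. ennreal (2 * (indicator {0..} x * (cmod (h x))\<^sup>2)) \<partial>lborel)
      + (\<integral>\<^sup>+x. ennreal (2 * d\<^sup>2 * (indicator {0..} x * (cmod (h (c * x)))\<^sup>2)) \<partial>lborel)"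
    by (rule nn_integral_add) measurable
  also have "(\<integral>\<^sup>+x. ennreal (2 * (indicator {0..} x * (cmod (h x))\<^sup>2)) \<partial>lborel) = 2 * NN h"
    unfolding NN_def by (simp add: ennreal_mult nn_integral_cmult)
  also have "(\<integral>\<^sup>+x. ennreal (2 * d\<^sup>2 * (indicator {0..} x * (cmod (h (c * x)))\<^sup>2)) \<partial>lborel)
     = ennreal (2 * d\<^sup>2) * (\<integral>\<^sup>+x. ennreal (indicator {0..} x * (cmod (h (c * x)))\<^sup>2) \<partial>lborel)"
    by (simp add: ennreal_mult nn_integral_cmult)
  finally have "NN (\<lambda>x. h x + complex_of_real d * h (c * x)) < \<infinity>"
    using hN NN_scaled_finite[OF hm hN c]
    by (auto simp: ennreal_mult_less_top le_less_trans)
  thus ?thesis unfolding L2_iff by simp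
qed


lemma surj_lemma:
  assumes m: "m \<ge> 2" and g: "L2 g"
  shows "\<exists>f. L2 f \<and> (AE x in lborel. 0 \<le> x \<longrightarrow> Top m f x = complex_of_real (sqrt 2) * g x)"
proof -
  define q where "q = qq m"
  have q: "q > 0" unfolding q_def using qq_pos[OF m] .
  have qsq: "q\<^sup>2 = real m / 2" unfolding q_def by (rule qq_sq)
  have lm: "real m > 0" using m by simp
  define l where "l = 1 / real m"
  have l: "l > 0" unfolding l_def using lm by simp
  define s where "s = 1 / sqrt (2 * real m)"
  have s: "s > 0" unfolding s_def using lm by simp
  have ssq: "s\<^sup>2 = l / 2" unfolding s_def l_def using lm by (simp add: power_divide)
  define \<sigma> where "\<sigma> x = (\<Sum>k. complex_of_real ((- s)^k) * g (l ^ k * x))" for x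
  have \<sigma>L2: "L2 \<sigma>" unfolding \<sigma>_def
    by (rule series_L2[OF g l _ ssq]) (use s in \<open>auto simp: norm_power\<close>)
  have \<sigma>m[measurable]: "\<sigma> \<in> borel_measurable borel" and \<sigma>N: "NN \<sigma> < \<infinity>" using \<sigma>L2 L2_iff by auto
  define a where "a = 1 / sqrt (real m)"
  define h where "h x = complex_of_real a * \<sigma> (l * x)" for x
  have hm[measurable]: "h \<in> borel_measurable borel" unfolding h_def by measurable
  have "NN h = (\<integral>\<^sup>+x. ennreal (a\<^sup>2) * ennreal (indicator {0..} x * (cmod (\<sigma> (l * x)))\<^sup>2) \<partial>lborel)"
    unfolding NN_def h_def by (simp add: norm_mult power_mult_distrib ennreal_mult mult_ac)
  also have "\<dots> = ennreal (a\<^sup>2) * (\<integral>\<^sup>+x. ennreal (indicator {0..} x * (cmod (\<sigma> (l * x)))\<^sup>2) \<partial>lborel)"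
    by (rule nn_integral_cmult) measurable
  finally have hN: "NN h < \<infinity>" using NN_scaled_finite[OF \<sigma>m \<sigma>N l] by (simp add: ennreal_mult_less_top)
  have hL2: "L2 h" using hm hN L2_iff by auto
  define f where "f x = h x + complex_of_real q * h (real m * x)" for x
  have fL2: "L2 f" unfolding f_def by (rule L2_comb[OF hL2 lm])
  have AEg: "AE x in lborel. 0 \<le> x \<longrightarrow> summable (\<lambda>k. s^k * cmod (g (l ^ k * x)))"
    by (rule conv_lemma(1)[OF g l _ ssq]) (use s in simp)
  have AEh: "AE x in lborel. 0 \<le> x \<longrightarrow> summable (\<lambda>k. q^k * cmod (h (real m ^ k * x)))"
    by (rule conv_lemma(1)[OF hL2 lm _ qsq]) (use q in simp)
  have asq: "a\<^sup>2 = 1 / real m" unfolding a_def using lm by (simp add: power_divide)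
  have a: "a > 0" unfolding a_def using lm by simp
  have e1: "2 * q * s = 1"
  proof -
    have "(2 * q * s)\<^sup>2 = 4 * q\<^sup>2 * s\<^sup>2" by (simp add: power_mult_distrib)
    also have "\<dots> = 1" unfolding qsq ssq l_def using lm by simp
    finally have "(2 * q * s)\<^sup>2 = 1\<^sup>2" by simp
    thus ?thesis using q s by (subst (asm) power2_eq_iff_nonneg) auto
  qed
  have e2: "2 * q * a = sqrt 2"
  proof -
    have "(2 * q * a)\<^sup>2 = 4 * q\<^sup>2 * a\<^sup>2" by (simp add: power_mult_distrib)
    also have "\<dots> = 2" unfolding qsq asq using lm by simp
    finally have "(2 * q * a)\<^sup>2 = (sqrt 2)\<^sup>2" by simp
    thus ?thesis using q a by (subst (asm) power2_eq_iff_nonneg) auto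
  qed
  have "AE x in lborel. 0 \<le> x \<longrightarrow> Top m f x = complex_of_real (sqrt 2) * g x"
    using AEg AEh proof eventually_elim
    case (elim x)
    show ?case
    proof
      assume x: "0 \<le> x"
      with elim have sg: "summable (\<lambda>k. s^k * cmod (g (l ^ k * x)))"
        and sh: "summable (\<lambda>k. q^k * cmod (h (real m ^ k * x)))" by auto
      have fh: "f (real m ^ k * x) = h (real m ^ k * x) + complex_of_real (qq m) * h (real m ^ Suc k * x)" for k
        unfolding f_def q_def by (simp add: mult.assoc)
      have T: "Top m f x = h x + 2 * complex_of_real q * h (real m * x)"
        using lemA[OF m fh sh[unfolded q_def]] unfolding q_def .
      have hmx: "h (real m * x) = complex_of_real a * \<sigma> x"
        unfolding h_def l_def using lm by simp
      have \<sigma>x: "\<sigma> x = g x - complex_of_real s * \<sigma> (l * x)"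
        unfolding \<sigma>_def by (rule split_gen[OF sg s])
      have "Top m f x = complex_of_real a * \<sigma> (l * x) * (1 - complex_of_real (2 * q * s))
          + complex_of_real (2 * q * a) * g x"
        unfolding T hmx \<sigma>x by (simp add: h_def algebra_simps)
      also have "\<dots> = complex_of_real (sqrt 2) * g x" unfolding e1 e2 by simp
      finally show "Top m f x = complex_of_real (sqrt 2) * g x" .
    qed
  qed
  thus ?thesis using fL2 by blast
qed

lemma C0_L2:
  assumes "C0 f" shows "L2 f"
proof -
  obtain a b where c: "continuous_on {0<..} f" and ab: "0 < a" "a \<le> b"
    and z: "\<And>x. x \<notin> {a..b} \<Longrightarrow> f x = 0"
    using assms unfolding C0_def by blast
  have feq: "f = (\<lambda>x. if x \<in> {0<..} then f x else 0)"
    using z ab by (auto intro!: ext)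
  have fm: "f \<in> borel_measurable borel"
    by (subst feq, rule borel_measurable_continuous_on_if) (use c in auto)
  have "continuous_on {a..b} f" by (rule continuous_on_subset[OF c]) (use ab in auto)
  hence "compact (f ` {a..b})" by (rule compact_continuous_image) simp
  then obtain B where B: "B > 0" "\<And>x. x \<in> {a..b} \<Longrightarrow> cmod (f x) \<le> B"
    using compact_imp_bounded bounded_pos by (metis imageI)
  have "NN f \<le> (\<integral>\<^sup>+x. ennreal (B\<^sup>2) * indicator {a..b} x \<partial>lborel)"
    unfolding NN_def
  proof (rule nn_integral_mono)
    fix x
    show "ennreal (indicator {0..} x * (cmod (f x))\<^sup>2) \<le> ennreal (B\<^sup>2) * indicator {a..b} x"
    proof (cases "x \<in> {a..b}")
      case True
      hence "(cmod (f x))\<^sup>2 \<le> B\<^sup>2" using B by (intro power_mono) auto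
      thus ?thesis using True ab by (auto simp: indicator_def intro: ennreal_leI)
    qed (simp add: z)
  qed
  also have "\<dots> = ennreal (B\<^sup>2) * emeasure lborel {a..b}" by (rule nn_integral_cmult_indicator) simp
  also have "\<dots> < \<infinity>" using ab by (simp add: ennreal_mult_less_top)
  finally show ?thesis unfolding L2_iff using fm by simp
qed


lemma NN_half:
  assumes [measurable]: "T \<in> borel_measurable borel"
  shows "NN (\<lambda>x. complex_of_real (1 / sqrt 2) * T x) = ennreal (1/2) * NN T"
proof -
  have "NN (\<lambda>x. complex_of_real (1 / sqrt 2) * T x)
      = (\<integral>\<^sup>+x. ennreal (1/2) * ennreal (indicator {0..} x * (cmod (T x))\<^sup>2) \<partial>lborel)"
    unfolding NN_def
  proof (rule nn_integral_cong)
    fix x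
    have pt: "indicator {0..} x * (cmod (complex_of_real (1 / sqrt 2) * T x))\<^sup>2 = (1/2) * (indicator {0..} x * (cmod (T x))\<^sup>2)"
      by (simp add: norm_mult norm_divide power_mult_distrib power_divide)
    show "ennreal (indicator {0..} x * (cmod (complex_of_real (1 / sqrt 2) * T x))\<^sup>2) = ennreal (1/2) * ennreal (indicator {0..} x * (cmod (T x))\<^sup>2)"
      unfolding pt by (rule ennreal_mult) auto
  qed
  also have "\<dots> = ennreal (1/2) * NN T" unfolding NN_def by (rule nn_integral_cmult) measurable
  finally show ?thesis .
qed

lemma Top_lin:
  assumes m: "m \<ge> 2"
    and sf: "summable (\<lambda>k. (qq m)^k * cmod (f (real m ^ k * x)))"
    and sg: "summable (\<lambda>k. (qq m)^k * cmod (g (real m ^ k * x)))"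
  shows "Top m (\<lambda>x. f x + c * g x) x = Top m f x + c * Top m g x"
proof -
  have s: "summable (\<lambda>k. (qq m)^k * cmod (f (real m ^ k * x) + c * g (real m ^ k * x)))"
  proof (rule summable_comparison_test'[where g="\<lambda>k. (qq m)^k * cmod (f (real m ^ k * x)) + cmod c * ((qq m)^k * cmod (g (real m ^ k * x)))"])
    show "summable (\<lambda>k. (qq m)^k * cmod (f (real m ^ k * x)) + cmod c * ((qq m)^k * cmod (g (real m ^ k * x))))"
      by (intro summable_add summable_mult sf sg)
    fix k
    have "cmod (f (real m ^ k * x) + c * g (real m ^ k * x)) \<le> cmod (f (real m ^ k * x)) + cmod c * cmod (g (real m ^ k * x))"
      by (metis norm_mult norm_triangle_ineq)
    hence "(qq m)^k * cmod (f (real m ^ k * x) + c * g (real m ^ k * x)) \<le> (qq m)^k * (cmod (f (real m ^ k * x)) + cmod c * cmod (g (real m ^ k * x)))"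
      by (rule mult_left_mono) simp
    thus "norm ((qq m)^k * cmod (f (real m ^ k * x) + c * g (real m ^ k * x))) \<le> (qq m)^k * cmod (f (real m ^ k * x)) + cmod c * ((qq m)^k * cmod (g (real m ^ k * x)))"
      by (simp add: algebra_simps)
  qed
  have "Top m (\<lambda>x. f x + c * g x) x = (\<Sum>k. al m k * (f (real m ^ k * x) + c * g (real m ^ k * x)))"
    using Top_abs(2)[OF m, of "\<lambda>x. f x + c * g x" x] s by simp
  also have "\<dots> = (\<Sum>k. al m k * f (real m ^ k * x)) + c * (\<Sum>k. al m k * g (real m ^ k * x))"
    using Top_abs(1)[OF m sf] Top_abs(1)[OF m sg]
    by (simp add: distrib_left suminf_add[symmetric] suminf_mult[symmetric] summable_mult mult_ac)
  also have "\<dots> = Top m f x + c * Top m g x" using Top_abs(2)[OF m sf] Top_abs(2)[OF m sg] by simp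
  finally show ?thesis .
qed

theorem mainTheorem9:
  fixes m :: nat
  assumes "m \<ge> 2"
  shows "(\<forall>f. C0 f \<longrightarrow> L2norm (Top m f) = sqrt 2 * L2norm f)
    \<and> (\<exists>U :: (real \<Rightarrow> complex) \<Rightarrow> (real \<Rightarrow> complex).
         (\<forall>f. L2 f \<longrightarrow> L2 (U f))
       \<and> (\<forall>f g c. L2 f \<longrightarrow> L2 g \<longrightarrow> ae_eq0 (U (\<lambda>x. f x + c * g x)) (\<lambda>x. U f x + c * U g x))
       \<and> (\<forall>f. L2 f \<longrightarrow> L2norm (U f) = L2norm f)
       \<and> (\<forall>g. L2 g \<longrightarrow> (\<exists>f. L2 f \<and> ae_eq0 (U f) g))
       \<and> (\<forall>f. C0 f \<longrightarrow> ae_eq0 (Top m f) (\<lambda>x. complex_of_real (sqrt 2) * U f x)))"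
proof -
  have m: "m \<ge> 2" using assms .
  have lm: "real m > 0" using m by simp
  define U where "U f = (\<lambda>x. complex_of_real (1 / sqrt 2) * Top m f x)" for f
  have UL2: "L2 (U f) \<and> NN (U f) = NN f" if f: "L2 f" for f
  proof -
    have fm: "f \<in> borel_measurable borel" using f L2_iff by auto
    have Tm[measurable]: "Top m f \<in> borel_measurable borel" using Top_meas[OF fm] .
    have "NN (U f) = ennreal (1/2) * (2 * NN f)" unfolding U_def NN_half[OF Tm] main_iso(2)[OF m f] ..
    also have "\<dots> = (ennreal (1/2) * ennreal 2) * NN f" by (simp only: mult.assoc ennreal_numeral)
    also have "ennreal (1/2) * ennreal 2 = ennreal (1/2 * 2)" by (rule ennreal_mult[symmetric]) auto
    also have "ennreal (1/2 * 2 :: real) * NN f = NN f" by simp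
    finally have N: "NN (U f) = NN f" .
    have "U f \<in> borel_measurable borel" unfolding U_def by measurable
    thus ?thesis using N f L2_iff by auto
  qed
  have P1: "\<forall>f. C0 f \<longrightarrow> L2norm (Top m f) = sqrt 2 * L2norm f"
  proof (intro allI impI)
    fix f assume "C0 f"
    hence f: "L2 f" by (rule C0_L2)
    have fm: "f \<in> borel_measurable borel" using f L2_iff by auto
    have "L2norm (Top m f) = sqrt (enn2real (2 * NN f))"
      using L2norm_eq[OF Top_meas[OF fm]] main_iso(2)[OF m f] by simp
    also have "\<dots> = sqrt 2 * L2norm f" using L2norm_eq[OF fm] by (simp add: enn2real_mult real_sqrt_mult)
    finally show "L2norm (Top m f) = sqrt 2 * L2norm f" .
  qed
  have P2: "\<forall>f g c. L2 f \<longrightarrow> L2 g \<longrightarrow> ae_eq0 (U (\<lambda>x. f x + c * g x)) (\<lambda>x. U f x + c * U g x)"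
  proof (intro allI impI)
    fix f g c assume f: "L2 f" and g: "L2 g"
    have AEf: "AE x in lborel. 0 \<le> x \<longrightarrow> summable (\<lambda>k. (qq m)^k * cmod (f (real m ^ k * x)))"
      by (rule conv_lemma(1)[OF f lm qq_nonneg qq_sq])
    have AEg: "AE x in lborel. 0 \<le> x \<longrightarrow> summable (\<lambda>k. (qq m)^k * cmod (g (real m ^ k * x)))"
      by (rule conv_lemma(1)[OF g lm qq_nonneg qq_sq])
    show "ae_eq0 (U (\<lambda>x. f x + c * g x)) (\<lambda>x. U f x + c * U g x)"
      unfolding ae_eq0_def using AEf AEg proof eventually_elim
      case (elim x)
      show ?case
      proof
        assume "0 \<le> x"
        with elim have "Top m (\<lambda>x. f x + c * g x) x = Top m f x + c * Top m g x"
          using Top_lin[OF m] by blast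
        thus "U (\<lambda>x. f x + c * g x) x = U f x + c * U g x"
          unfolding U_def by (simp add: algebra_simps)
      qed
    qed
  qed
  have P3: "\<forall>f. L2 f \<longrightarrow> L2norm (U f) = L2norm f"
  proof (intro allI impI)
    fix f assume f: "L2 f"
    have fm: "f \<in> borel_measurable borel" using f L2_iff by auto
    have um: "U f \<in> borel_measurable borel" using UL2[OF f] L2_iff by auto
    show "L2norm (U f) = L2norm f" using L2norm_eq[OF um] L2norm_eq[OF fm] UL2[OF f] by simp
  qed
  have P4: "\<forall>g. L2 g \<longrightarrow> (\<exists>f. L2 f \<and> ae_eq0 (U f) g)"
  proof (intro allI impI)
    fix g assume g: "L2 g"
    obtain f where f: "L2 f" and ae: "AE x in lborel. 0 \<le> x \<longrightarrow> Top m f x = complex_of_real (sqrt 2) * g x"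
      using surj_lemma[OF m g] by blast
    have "ae_eq0 (U f) g" unfolding ae_eq0_def using ae
      by eventually_elim (auto simp: U_def)
    thus "\<exists>f. L2 f \<and> ae_eq0 (U f) g" using f by blast
  qed
  have P5: "\<forall>f. C0 f \<longrightarrow> ae_eq0 (Top m f) (\<lambda>x. complex_of_real (sqrt 2) * U f x)"
    unfolding ae_eq0_def U_def by (auto simp: mult.assoc[symmetric] of_real_mult[symmetric] simp del: of_real_mult)
  have P0: "\<forall>f. L2 f \<longrightarrow> L2 (U f)" using UL2 by blast
  show ?thesis
    by (intro conjI[OF P1] exI[of _ U]) (use P0 P2 P3 P4 P5 in blast)
qed

end
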